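(* Let $\mathcal{U}$ and $\mathcal{C}$ be finite-dimensional vector spaces over a common finite field, let $\Theta:\mathcal{U}\to\mathcal{S}_=(\mathcal{H}_{Y_{[1:L]}})$, $u\mapsto\rho^u_{Y_{[1:L]}}$, be a classical-quantum channel, and let $\mathbb{A}\subseteq2^{[1:L]}$. Let $U\sim\tilde P_U$ with $\mathbb{V}(\tilde P_U,P^U_U)\le\epsilon'$, where $P^U_U$ is uniform on $\mathcal{U}$. Suppose there is a source code for $U$ with compound quantum side information $(\rho^U_{Y_{\mathcal{A}}})_{\mathcal{A}\in\mathbb{A}}$ consisting of a linear encoder $g:\mathcal{U}\to\mathcal{C}$ and decoders $h_{\mathcal{A}}$ ($\mathcal{A}\in\mathbb{A}$), each of which given $c\in\mathcal{C}$ performs a measurement on $\mathcal{H}_{Y_{\mathcal{A}}}$ with outcomes in $\mathcal{U}$, such that $\max_{\mathcal{A}\in\mathbb{A}}\Pr_{U\sim\tilde P_U}[h_{\mathcal{A}}(\rho^U_{Y_{\mathcal{A}}},g(U))\ne U]\le\epsilon''$. Then, for a secret set $\mathcal{S}$ with $|\mathcal{S}|=|\mathcal{U}|/|\mathcal{C}|$ and $S$ uniform on $\mathcal{S}$, there exist encoders $\mathsf{Enc}_c:\mathcal{S}\to\mathcal{U}$ and decoding measurements $\mathsf{Dec}_{c,\mathcal{A}}$ on $\mathcal{H}_{Y_{\mathcal{A}}}$ with outcomes in $\mathcal{S}$, for $c\in\mathcal{C}$, $\mathcal{A}\in\mathbb{A}$, such that $$\max_{\mathcal{A}\in\mathbb{A}}\sum_{c\in\mathcal{C}}\frac1{|\mathcal{C}|}\bar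 P^{c,\mathcal{A}}_e\le\epsilon'+\epsilon'',\qquad \bar P^{c,\mathcal{A}}_e=\mathbb{E}_S\Big[\Pr\big[\mathsf{Dec}_{c,\mathcal{A}}(\rho^{\mathsf{Enc}_c(S)}_{Y_{\mathcal{A}}})\ne S\big]\Big].$$
   Context: $\mathcal{H}_{Y_{[1:L]}}=\mathcal{H}_{Y_1}\otimes\cdots\otimes\mathcal{H}_{Y_L}$ (finite-dimensional), $\mathcal{S}_=(\mathcal{H})$ is the set of density operators, and $\rho^u_{Y_{\mathcal{A}}}$ is the reduced state on $Y_l$, $l\in\mathcal{A}$. The variational distance is $\mathbb{V}(p,q)=\sum_x|p(x)-q(x)|$. *)

theory Defs
  imports "HOL-Analysis.Analysis"
begin

text \<open>Composite quantum system Y_1 ... Y_L, subsystem l has dimension d l.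
  Basis vectors of H_{Y_A} are indexed by functions x in PiE A (lambda l. {..<d l}).
  Operators on H_{Y_A} are complex-valued kernels on these indices.\<close>

type_synonym idx = "nat \<Rightarrow> nat"
type_synonym qop = "idx \<Rightarrow> idx \<Rightarrow> complex"

definition qbasis :: "(nat \<Rightarrow> nat) \<Rightarrow> nat set \<Rightarrow> idx set" where
  "qbasis d A = PiE A (\<lambda>l. {..<d l})"

definition qpsd :: "(nat \<Rightarrow> nat) \<Rightarrow> nat set \<Rightarrow> qop \<Rightarrow> bool" where
  "qpsd d A M \<longleftrightarrow> (\<forall>v :: idx \<Rightarrow> complex.
     let q = (\<Sum>x\<in>qbasis d A. \<Sum>y\<in>qbasis d A. cnj (v x) * M x y * v y)
     in Im q = 0 \<and> Re q \<ge> 0)"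

definition qtrace :: "(nat \<Rightarrow> nat) \<Rightarrow> nat set \<Rightarrow> qop \<Rightarrow> complex" where
  "qtrace d A M = (\<Sum>x\<in>qbasis d A. M x x)"

definition density :: "(nat \<Rightarrow> nat) \<Rightarrow> nat set \<Rightarrow> qop \<Rightarrow> bool" where
  "density d A \<rho> \<longleftrightarrow> qpsd d A \<rho> \<and> qtrace d A \<rho> = 1"

definition reduced :: "(nat \<Rightarrow> nat) \<Rightarrow> nat \<Rightarrow> nat set \<Rightarrow> qop \<Rightarrow> qop" where
  "reduced d L A \<rho> = (\<lambda>x y. \<Sum>z\<in>qbasis d ({1..L} - A).
      \<rho> (\<lambda>l. if l \<in> A then x l else z l) (\<lambda>l. if l \<in> A then y l else z l))"

definition povm :: "(nat \<Rightarrow> nat) \<Rightarrow> nat set \<Rightarrow> 'x set \<Rightarrow> ('x \<Rightarrow> qop) \<Rightarrow> bool" where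
  "povm d A X M \<longleftrightarrow> finite X \<and> (\<forall>x\<in>X. qpsd d A (M x)) \<and>
     (\<forall>a\<in>qbasis d A. \<forall>b\<in>qbasis d A. (\<Sum>x\<in>X. M x a b) = (if a = b then 1 else 0))"

definition qprob :: "(nat \<Rightarrow> nat) \<Rightarrow> nat set \<Rightarrow> qop \<Rightarrow> qop \<Rightarrow> real" where
  "qprob d A M \<rho> = Re (\<Sum>a\<in>qbasis d A. \<Sum>b\<in>qbasis d A. M a b * \<rho> b a)"

definition vdist :: "('a::finite \<Rightarrow> real) \<Rightarrow> ('a \<Rightarrow> real) \<Rightarrow> real" where
  "vdist p q = (\<Sum>x\<in>UNIV. \<bar>p x - q x\<bar>)"

end

theory Submission
  imports Defs
begin


definition sform :: "'a set \<Rightarrow> ('a \<Rightarrow> 'a \<Rightarrow> complex) \<Rightarrow> ('a \<Rightarrow> complex) \<Rightarrow> ('a \<Rightarrow> complex) \<Rightarrow> complex" where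
  "sform X M u v = (\<Sum>x\<in>X. \<Sum>y\<in>X. cnj (u x) * M x y * v y)"

definition psdon :: "'a set \<Rightarrow> ('a \<Rightarrow> 'a \<Rightarrow> complex) \<Rightarrow> bool" where
  "psdon X M \<longleftrightarrow> (\<forall>v. Im (sform X M v v) = 0 \<and> Re (sform X M v v) \<ge> 0)"

definition ev :: "'a \<Rightarrow> 'a \<Rightarrow> complex" where "ev x = (\<lambda>y. if y = x then 1 else 0)"

lemma qpsd_eq: "qpsd d A M = psdon (qbasis d A) M"
  by (simp add: qpsd_def psdon_def sform_def Let_def)

lemma sform_expand:
  "sform X M (\<lambda>y. u y + t * w y) (\<lambda>y. u y + t * w y) =
     sform X M u u + t * sform X M u w + cnj t * sform X M w u + cnj t * t * sform X M w w"
proof -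
  have "cnj (u x + t * w y') * M x y * (u y + t * w y) = 0" if "False" for x y y' using that by simp
  have *: "cnj (u x + t * w x) * M x y * (u y + t * w y) =
     cnj (u x) * M x y * u y + t * (cnj (u x) * M x y * w y) + cnj t * (cnj (w x) * M x y * u y)
       + cnj t * t * (cnj (w x) * M x y * w y)" for x y
    by (simp add: algebra_simps)
  show ?thesis unfolding sform_def * by (simp add: sum.distrib sum_distrib_left)
qed

lemma sform_ev_right: "finite X \<Longrightarrow> x \<in> X \<Longrightarrow> sform X M u (ev x) = (\<Sum>a\<in>X. cnj (u a) * M a x)"
  unfolding sform_def ev_def by (simp add: if_distrib cong: if_cong)

lemma sform_ev_left: "finite X \<Longrightarrow> x \<in> X \<Longrightarrow> sform X M (ev x) v = (\<Sum>b\<in>X. M x b * v b)"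
proof -
  assume "finite X" "x \<in> X"
  have "sform X M (ev x) v = (\<Sum>xa\<in>X. if xa = x then (\<Sum>y\<in>X. M xa y * v y) else 0)"
    unfolding sform_def ev_def by (intro sum.cong refl) auto
  thus ?thesis using \<open>finite X\<close> \<open>x \<in> X\<close> by simp
qed

lemma sform_ev_ev: "finite X \<Longrightarrow> a \<in> X \<Longrightarrow> b \<in> X \<Longrightarrow> sform X M (ev a) (ev b) = M a b"
  by (simp add: sform_ev_left) (simp add: ev_def if_distrib cong: if_cong)

lemma psd_diag: "psdon X M \<Longrightarrow> finite X \<Longrightarrow> a \<in> X \<Longrightarrow> Im (M a a) = 0 \<and> Re (M a a) \<ge> 0"
  using sform_ev_ev[of X a a M] unfolding psdon_def by metis

lemma psd_herm:
  assumes p: "psdon X M" and f: "finite X" and a: "a \<in> X" and b: "b \<in> X"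
  shows "M a b = cnj (M b a)"
proof -
  have e1: "sform X M (\<lambda>y. ev a y + 1 * ev b y) (\<lambda>y. ev a y + 1 * ev b y) = M a a + M a b + M b a + M b b"
    using sform_expand[of X M "ev a" 1 "ev b"] sform_ev_ev[OF f] a b by simp
  have e2: "sform X M (\<lambda>y. ev a y + \<i> * ev b y) (\<lambda>y. ev a y + \<i> * ev b y) = M a a + \<i> * M a b - \<i> * M b a + M b b"
    using sform_expand[of X M "ev a" \<i> "ev b"] sform_ev_ev[OF f] a b by simp
  have i1: "Im (M a a + M a b + M b a + M b b) = 0" using p e1 unfolding psdon_def by metis
  have i2: "Im (M a a + \<i> * M a b - \<i> * M b a + M b b) = 0" using p e2 unfolding psdon_def by metis
  have "Im (M a a) = 0" "Im (M b b) = 0" using psd_diag[OF p f] a b by auto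
  with i1 i2 show ?thesis by (intro complex_eqI) auto
qed

lemma psd_restrict:
  assumes p: "psdon X M" and f: "finite X" and sub: "Y \<subseteq> X"
  shows "psdon Y M"
  unfolding psdon_def
proof
  fix v
  define v' :: "'a \<Rightarrow> complex" where "v' x = (if x \<in> Y then v x else 0)" for x
  have "sform X M v' v' = sform Y M v v"
  proof -
    have "sform X M v' v' = (\<Sum>x\<in>Y. \<Sum>y\<in>X. cnj (v' x) * M x y * v' y)"
      unfolding sform_def using f sub by (intro sum.mono_neutral_right) (auto simp: v'_def)
    also have "\<dots> = (\<Sum>x\<in>Y. \<Sum>y\<in>Y. cnj (v' x) * M x y * v' y)"
      using f sub by (intro sum.cong refl sum.mono_neutral_right) (auto simp: v'_def)
    also have "\<dots> = sform Y M v v" unfolding sform_def by (intro sum.cong refl) (auto simp: v'_def)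
    finally show ?thesis .
  qed
  thus "Im (sform Y M v v) = 0 \<and> 0 \<le> Re (sform Y M v v)" using p unfolding psdon_def by metis
qed

lemma tr_drop:
  fixes M \<rho> :: "'a \<Rightarrow> 'a \<Rightarrow> complex"
  assumes "finite F" "x \<notin> F" "\<forall>b\<in>insert x F. \<rho> b x = 0" "\<forall>a\<in>insert x F. \<rho> x a = 0"
  shows "(\<Sum>a\<in>insert x F. \<Sum>b\<in>insert x F. M a b * \<rho> b a) = (\<Sum>a\<in>F. \<Sum>b\<in>F. M a b * \<rho> b a)"
  using assms by (simp add: sum.insert)

lemma trace_nonneg:
  assumes "finite X"
  shows "psdon X \<rho> \<Longrightarrow> psdon X M \<Longrightarrow> Re (\<Sum>a\<in>X. \<Sum>b\<in>X. M a b * \<rho> b a) \<ge> 0"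
  using assms
proof (induction X arbitrary: \<rho> M rule: finite_induct)
  case empty
  then show ?case by simp
next
  case (insert x F \<rho> M)
  define X where "X = insert x F"
  have fX: "finite X" using insert X_def by simp
  have xX: "x \<in> X" using X_def by simp
  have pr: "psdon X \<rho>" and pM: "psdon X M" using insert X_def by auto
  have pMF: "psdon F M" using psd_restrict[OF pM fX] X_def by auto
  have herm: "\<rho> a b = cnj (\<rho> b a)" if "a \<in> X" "b \<in> X" for a b using psd_herm[OF pr fX that] .
  define r where "r = \<rho> x x"
  have rI: "Im r = 0" and rR: "Re r \<ge> 0" using psd_diag[OF pr fX xX] r_def by auto
  show ?case
  proof (cases "r = 0")
    case True
    have z: "\<rho> x a = 0" if aX: "a \<in> X" for a
    proof (rule ccontr)
      assume nz: "\<rho> x a \<noteq> 0"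
      define q where "q = (cmod (\<rho> x a))\<^sup>2"
      have qpos: "q > 0" using nz q_def by simp
      define s where "s = (Re (\<rho> a a) + 1) / (2 * q)"
      define t where "t = - (complex_of_real s) * \<rho> x a"
      have "sform X \<rho> (\<lambda>y. ev a y + t * ev x y) (\<lambda>y. ev a y + t * ev x y) =
              \<rho> a a + t * \<rho> a x + cnj t * \<rho> x a + cnj t * t * \<rho> x x"
        using sform_expand[of X \<rho> "ev a" t "ev x"] sform_ev_ev[OF fX] aX xX by simp
      also have "\<dots> = \<rho> a a - 2 * complex_of_real s * (\<rho> x a * cnj (\<rho> x a))"
        using herm[OF aX xX] True r_def unfolding t_def by (simp add: algebra_simps)
      also have "\<rho> x a * cnj (\<rho> x a) = complex_of_real q" unfolding q_def
        by (rule complex_norm_square[symmetric])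
      finally have "Re (sform X \<rho> (\<lambda>y. ev a y + t * ev x y) (\<lambda>y. ev a y + t * ev x y)) = Re (\<rho> a a) - 2 * s * q"
        by simp
      also have "\<dots> = -1" unfolding s_def using qpos by (simp add: field_simps)
      finally show False using pr unfolding psdon_def by (metis neg_0_le_iff_le not_one_le_zero)
    qed
    have z2: "\<rho> b x = 0" if "b \<in> X" for b using herm[OF that xX] z[OF that] by simp
    have "(\<Sum>a\<in>X. \<Sum>b\<in>X. M a b * \<rho> b a) = (\<Sum>a\<in>F. \<Sum>b\<in>F. M a b * \<rho> b a)"
      unfolding X_def using insert z z2 X_def by (intro tr_drop) auto
    moreover have "psdon F \<rho>" using psd_restrict[OF pr fX] X_def by auto
    ultimately show ?thesis using insert.IH pMF X_def by simp
  next
    case False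
    have rreal: "r = complex_of_real (Re r)" using rI by (simp add: complex_eq_iff)
    have rpos: "Re r > 0" using rR False rreal by (metis less_eq_real_def of_real_0)
    define \<rho>' where "\<rho>' a b = \<rho> a b - \<rho> a x * \<rho> x b / r" for a b
    have psd': "psdon X \<rho>'" unfolding psdon_def
    proof
      fix v
      define \<alpha> where "\<alpha> = (\<Sum>a\<in>X. cnj (v a) * \<rho> a x)"
      define \<beta> where "\<beta> = (\<Sum>b\<in>X. \<rho> x b * v b)"
      define t where "t = - \<beta> / r"
      have "sform X \<rho>' v v = sform X \<rho> v v - \<alpha> * \<beta> / r"
      proof -
        have "sform X \<rho>' v v = sform X \<rho> v v - (\<Sum>a\<in>X. \<Sum>b\<in>X. (cnj (v a) * \<rho> a x) * (\<rho> x b * v b)) / r"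
          unfolding sform_def \<rho>'_def by (simp add: algebra_simps sum_subtractf sum_divide_distrib)
        thus ?thesis unfolding \<alpha>_def \<beta>_def by (simp add: sum_product)
      qed
      also have "\<dots> = sform X \<rho> (\<lambda>y. v y + t * ev x y) (\<lambda>y. v y + t * ev x y)"
      proof -
        have c: "cnj r = r" using rI by (simp add: complex_eq_iff)
        have "sform X \<rho> (\<lambda>y. v y + t * ev x y) (\<lambda>y. v y + t * ev x y) =
            sform X \<rho> v v + t * \<alpha> + cnj t * \<beta> + cnj t * t * r"
          using sform_expand[of X \<rho> v t "ev x"] sform_ev_right[OF fX xX] sform_ev_left[OF fX xX]
            sform_ev_ev[OF fX xX xX] unfolding \<alpha>_def \<beta>_def r_def by simp
        also have "\<dots> = sform X \<rho> v v - \<alpha> * \<beta> / r"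
          unfolding t_def using False c by (simp add: field_simps)
        finally show ?thesis by simp
      qed
      finally show "Im (sform X \<rho>' v v) = 0 \<and> 0 \<le> Re (sform X \<rho>' v v)" using pr unfolding psdon_def by metis
    qed
    have z1: "\<rho>' x b = 0" for b unfolding \<rho>'_def r_def using False r_def by simp
    have z2: "\<rho>' a x = 0" for a unfolding \<rho>'_def r_def using False r_def by simp
    have split: "(\<Sum>a\<in>X. \<Sum>b\<in>X. M a b * \<rho> b a) =
        (\<Sum>a\<in>X. \<Sum>b\<in>X. M a b * \<rho>' b a) + sform X M (\<lambda>b. \<rho> b x) (\<lambda>b. \<rho> b x) / r"
    proof -
      have "(\<Sum>a\<in>X. \<Sum>b\<in>X. M a b * \<rho> b a) = (\<Sum>a\<in>X. \<Sum>b\<in>X. M a b * \<rho>' b a + cnj (\<rho> a x) * M a b * \<rho> b x / r)"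
      proof (intro sum.cong refl)
        fix a b assume aX: "a \<in> X" and "b \<in> X"
        have h: "\<rho> x a = cnj (\<rho> a x)" by (rule herm[OF xX aX])
        show "M a b * \<rho> b a = M a b * \<rho>' b a + cnj (\<rho> a x) * M a b * \<rho> b x / r"
          unfolding \<rho>'_def h[symmetric] using False by (simp add: field_simps)
      qed
      thus ?thesis unfolding sform_def by (simp add: sum.distrib sum_divide_distrib)
    qed
    have "(\<Sum>a\<in>X. \<Sum>b\<in>X. M a b * \<rho>' b a) = (\<Sum>a\<in>F. \<Sum>b\<in>F. M a b * \<rho>' b a)"
      unfolding X_def using insert z1 z2 by (intro tr_drop) auto
    moreover have "Re \<dots> \<ge> 0" using insert.IH[OF psd_restrict[OF psd' fX] pMF] X_def by auto
    moreover have "Re (sform X M (\<lambda>b. \<rho> b x) (\<lambda>b. \<rho> b x) / r) \<ge> 0"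
    proof -
      have "Re (sform X M (\<lambda>b. \<rho> b x) (\<lambda>b. \<rho> b x) / r) = Re (sform X M (\<lambda>b. \<rho> b x) (\<lambda>b. \<rho> b x)) / Re r"
        by (subst rreal) (simp add: Re_divide_of_real)
      thus ?thesis using pM rpos unfolding psdon_def by simp
    qed
    ultimately show ?thesis using split X_def by simp
  qed
qed



definition mrg :: "nat set \<Rightarrow> idx \<Rightarrow> idx \<Rightarrow> idx" where
  "mrg A x z = (\<lambda>l. if l \<in> A then x l else z l)"

lemma finite_qbasis: "finite (qbasis d A)" if "finite A"
  unfolding qbasis_def using that by (intro finite_PiE) auto

lemma mrg_bij:
  assumes "A \<subseteq> R"
  shows "bij_betw (\<lambda>(x,z). mrg A x z) (qbasis d A \<times> qbasis d (R - A)) (qbasis d R)"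
proof (rule bij_betwI')
  fix p q assume p: "p \<in> qbasis d A \<times> qbasis d (R - A)" and q: "q \<in> qbasis d A \<times> qbasis d (R - A)"
  obtain x z where pe: "p = (x, z)" by fastforce
  obtain x' z' where qe: "q = (x', z')" by fastforce
  have ext: "x \<in> extensional A" "x' \<in> extensional A" "z \<in> extensional (R - A)" "z' \<in> extensional (R - A)"
    using p q pe qe unfolding qbasis_def by (auto simp: PiE_iff)
  show "((\<lambda>(x,z). mrg A x z) p = (\<lambda>(x,z). mrg A x z) q) = (p = q)"
  proof
    assume eq: "(\<lambda>(x,z). mrg A x z) p = (\<lambda>(x,z). mrg A x z) q"
    have e: "(if l \<in> A then x l else z l) = (if l \<in> A then x' l else z' l)" for l
    proof -
      have "mrg A x z = mrg A x' z'" using eq pe qe by simp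
      hence "mrg A x z l = mrg A x' z' l" by simp
      thus ?thesis unfolding mrg_def .
    qed
    have "x = x'"
    proof
      fix l show "x l = x' l" using e[of l] ext by (cases "l \<in> A") (auto simp: extensional_def)
    qed
    moreover have "z = z'"
    proof
      fix l show "z l = z' l" using e[of l] ext by (cases "l \<in> A") (auto simp: extensional_def)
    qed
    ultimately show "p = q" using pe qe by simp
  qed simp
next
  fix p assume p: "p \<in> qbasis d A \<times> qbasis d (R - A)"
  obtain x z where pe: "p = (x, z)" by fastforce
  show "(\<lambda>(x,z). mrg A x z) p \<in> qbasis d R"
    using p pe assms unfolding qbasis_def mrg_def by (auto simp: PiE_iff extensional_def)
next
  fix w assume w: "w \<in> qbasis d R"
  show "\<exists>p\<in>qbasis d A \<times> qbasis d (R - A). w = (\<lambda>(x,z). mrg A x z) p"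
  proof (intro bexI)
    show "w = (\<lambda>(x,z). mrg A x z) (restrict w A, restrict w (R - A))"
      using w unfolding qbasis_def mrg_def by (auto simp: PiE_iff extensional_def)
    show "(restrict w A, restrict w (R - A)) \<in> qbasis d A \<times> qbasis d (R - A)"
      using w assms unfolding qbasis_def by (auto simp: PiE_iff)
  qed
qed

lemma sum_qbasis_split:
  assumes "A \<subseteq> R"
  shows "(\<Sum>w\<in>qbasis d R. f w) = (\<Sum>x\<in>qbasis d A. \<Sum>z\<in>qbasis d (R - A). f (mrg A x z))"
proof -
  have "(\<Sum>w\<in>qbasis d R. f w) = (\<Sum>p\<in>qbasis d A \<times> qbasis d (R - A). f ((\<lambda>(x,z). mrg A x z) p))"
    by (rule sum.reindex_bij_betw[OF mrg_bij[OF assms], symmetric])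
  also have "\<dots> = (\<Sum>x\<in>qbasis d A. \<Sum>z\<in>qbasis d (R - A). f (mrg A x z))"
    by (simp add: sum.cartesian_product prod.case_distrib)
  finally show ?thesis .
qed

lemma restrict_mrg:
  assumes "x \<in> qbasis d A" "z \<in> qbasis d (R - A)"
  shows "restrict (mrg A x z) A = x" "restrict (mrg A x z) (R - A) = z"
  using assms unfolding qbasis_def mrg_def
  by (auto simp: PiE_iff extensional_def restrict_def fun_eq_iff)

lemma delta2:
  assumes fin: "finite B" and zB: "z \<in> B"
  shows "(\<Sum>z1\<in>B. \<Sum>y\<in>Y. \<Sum>z2\<in>B. if z1 = z \<and> z2 = z then T y else (0::complex)) = (\<Sum>y\<in>Y. T y)"
proof -
  have "(\<Sum>z1\<in>B. \<Sum>y\<in>Y. \<Sum>z2\<in>B. if z1 = z \<and> z2 = z then T y else (0::complex)) =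
     (\<Sum>z1\<in>B. if z1 = z then (\<Sum>y\<in>Y. \<Sum>z2\<in>B. if z2 = z then T y else 0) else 0)"
    by (intro sum.cong refl) auto
  also have "\<dots> = (\<Sum>y\<in>Y. \<Sum>z2\<in>B. if z2 = z then T y else 0)"
    by (simp only: sum.delta[OF fin] if_P[OF zB])
  also have "\<dots> = (\<Sum>y\<in>Y. T y)"
    by (intro sum.cong refl) (simp only: sum.delta[OF fin] if_P[OF zB])
  finally show ?thesis .
qed

lemma reduced_trace:
  assumes "A \<subseteq> {1..L}" "density d {1..L} \<rho>"
  shows "qtrace d A (reduced d L A \<rho>) = 1"
proof -
  have "qtrace d A (reduced d L A \<rho>) = (\<Sum>x\<in>qbasis d A. \<Sum>z\<in>qbasis d ({1..L} - A). \<rho> (mrg A x z) (mrg A x z))"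
    unfolding qtrace_def reduced_def mrg_def ..
  also have "\<dots> = qtrace d {1..L} \<rho>" unfolding qtrace_def using sum_qbasis_split[OF assms(1), of "\<lambda>w. \<rho> w w" d] by simp
  finally show ?thesis using assms(2) unfolding density_def by simp
qed

lemma reduced_psd:
  assumes AR: "A \<subseteq> {1..L}" and dens: "density d {1..L} \<rho>"
  shows "psdon (qbasis d A) (reduced d L A \<rho>)"
  unfolding psdon_def
proof
  fix v
  define R where "R = {1..L :: nat}"
  define B where "B = qbasis d (R - A)"
  have pR: "psdon (qbasis d R) \<rho>" using dens unfolding density_def qpsd_eq R_def by simp
  have fA: "finite (qbasis d A)" and fB: "finite B" using AR unfolding B_def R_def
    by (auto intro!: finite_qbasis intro: finite_subset)
  define V :: "idx \<Rightarrow> idx \<Rightarrow> complex" where "V z w = (if restrict w (R - A) = z then v (restrict w A) else 0)" for z w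
  have Vm: "V z (mrg A x z') = (if z' = z then v x else 0)" if "x \<in> qbasis d A" "z' \<in> B" for z x z'
    using restrict_mrg[OF that[unfolded B_def]] unfolding V_def by auto
  have key: "sform (qbasis d R) \<rho> (V z) (V z) =
      (\<Sum>x\<in>qbasis d A. \<Sum>y\<in>qbasis d A. cnj (v x) * \<rho> (mrg A x z) (mrg A y z) * v y)" if zB: "z \<in> B" for z
  proof -
    have "sform (qbasis d R) \<rho> (V z) (V z) =
       (\<Sum>x\<in>qbasis d A. \<Sum>z1\<in>B. \<Sum>y\<in>qbasis d A. \<Sum>z2\<in>B.
          cnj (V z (mrg A x z1)) * \<rho> (mrg A x z1) (mrg A y z2) * V z (mrg A y z2))"
      unfolding sform_def B_def using AR R_def by (simp add: sum_qbasis_split)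
    also have "\<dots> = (\<Sum>x\<in>qbasis d A. \<Sum>z1\<in>B. \<Sum>y\<in>qbasis d A. \<Sum>z2\<in>B.
          (if z1 = z \<and> z2 = z then cnj (v x) * \<rho> (mrg A x z) (mrg A y z) * v y else 0))"
      by (intro sum.cong refl) (auto simp: Vm)
    also have "\<dots> = (\<Sum>x\<in>qbasis d A. \<Sum>y\<in>qbasis d A. cnj (v x) * \<rho> (mrg A x z) (mrg A y z) * v y)"
      by (intro sum.cong refl delta2[OF fB zB])
    finally show ?thesis .
  qed
  have "sform (qbasis d A) (reduced d L A \<rho>) v v = (\<Sum>z\<in>B. sform (qbasis d R) \<rho> (V z) (V z))"
  proof -
    have "sform (qbasis d A) (reduced d L A \<rho>) v v =
        (\<Sum>x\<in>qbasis d A. \<Sum>y\<in>qbasis d A. \<Sum>z\<in>B. cnj (v x) * \<rho> (mrg A x z) (mrg A y z) * v y)"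
      unfolding sform_def reduced_def B_def R_def mrg_def by (simp add: sum_distrib_left sum_distrib_right)
    also have "\<dots> = (\<Sum>z\<in>B. \<Sum>x\<in>qbasis d A. \<Sum>y\<in>qbasis d A. cnj (v x) * \<rho> (mrg A x z) (mrg A y z) * v y)"
    proof -
      have "(\<Sum>x\<in>qbasis d A. \<Sum>y\<in>qbasis d A. \<Sum>z\<in>B. cnj (v x) * \<rho> (mrg A x z) (mrg A y z) * v y)
          = (\<Sum>x\<in>qbasis d A. \<Sum>z\<in>B. \<Sum>y\<in>qbasis d A. cnj (v x) * \<rho> (mrg A x z) (mrg A y z) * v y)"
        by (rule sum.cong[OF refl], rule sum.swap)
      also have "\<dots> = (\<Sum>z\<in>B. \<Sum>x\<in>qbasis d A. \<Sum>y\<in>qbasis d A. cnj (v x) * \<rho> (mrg A x z) (mrg A y z) * v y)"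
        by (rule sum.swap)
      finally show ?thesis .
    qed
    also have "\<dots> = (\<Sum>z\<in>B. sform (qbasis d R) \<rho> (V z) (V z))" using key by simp
    finally show ?thesis .
  qed
  moreover have "Im (sform (qbasis d R) \<rho> (V z) (V z)) = 0 \<and> Re (sform (qbasis d R) \<rho> (V z) (V z)) \<ge> 0" for z
    using pR unfolding psdon_def by blast
  ultimately show "Im (sform (qbasis d A) (reduced d L A \<rho>) v v) = 0 \<and> 0 \<le> Re (sform (qbasis d A) (reduced d L A \<rho>) v v)"
    by (simp add: Im_sum Re_sum sum_nonneg)
qed



lemma exists_E:
  fixes g :: "'f::{finite,field} ^ 'n \<Rightarrow> 'f ^ 'm" and S :: "'s set"
  assumes lin: "Vector_Spaces.linear ((*s) :: 'f \<Rightarrow> 'f ^ 'n \<Rightarrow> 'f ^ 'n) ((*s) :: 'f \<Rightarrow> 'f ^ 'm \<Rightarrow> 'f ^ 'm) g"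
    and S_card: "real (card S) = real CARD('f ^ 'n) / real CARD('f ^ 'm)"
  shows "\<exists>(E :: 'f ^ 'm \<Rightarrow> 's \<Rightarrow> 'f ^ 'n) \<phi>. bij_betw (\<lambda>(c,s). E c s) (UNIV \<times> S) UNIV \<and> (\<forall>c. \<forall>s\<in>S. g (E c s) = \<phi> c)"
proof -
  interpret L: Vector_Spaces.linear "(*s) :: 'f \<Rightarrow> 'f ^ 'n \<Rightarrow> 'f ^ 'n" "(*s) :: 'f \<Rightarrow> 'f ^ 'm \<Rightarrow> 'f ^ 'm" g by (rule lin)
  have gadd: "g (x + y) = g x + g y" for x y by (rule L.add)
  have gdiff: "g (x - y) = g x - g y" for x y by (rule L.diff)
  define K where "K = g -` {0}"
  define R where "R = range g"
  have fib: "card (g -` {y}) = card K" if yR: "y \<in> R" for y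
  proof -
    obtain u0 where u0: "g u0 = y" using yR R_def by auto
    have "g -` {y} = (\<lambda>k. u0 + k) ` K"
    proof
      show "g -` {y} \<subseteq> (\<lambda>k. u0 + k) ` K"
      proof
        fix u assume "u \<in> g -` {y}"
        hence "u - u0 \<in> K" using u0 gdiff K_def by auto
        thus "u \<in> (\<lambda>k. u0 + k) ` K" by (rule rev_image_eqI) simp
      qed
      show "(\<lambda>k. u0 + k) ` K \<subseteq> g -` {y}" using u0 gadd K_def by auto
    qed
    moreover have "inj_on (\<lambda>k. u0 + k) K" by (auto simp: inj_on_def)
    ultimately show ?thesis by (simp add: card_image)
  qed
  have cardU: "CARD('f ^ 'n) = card R * card K"
  proof -
    have "(UNIV :: ('f^'n) set) = (\<Union>y\<in>R. g -` {y})" using R_def by auto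
    moreover have "card (\<Union>y\<in>R. g -` {y}) = (\<Sum>y\<in>R. card (g -` {y}))"
      by (rule card_UN_disjoint) auto
    ultimately have "CARD('f ^ 'n) = (\<Sum>y\<in>R. card (g -` {y}))" by simp
    also have "\<dots> = card R * card K" using fib by simp
    finally show ?thesis .
  qed
  define F where "F = range (\<lambda>c. (\<lambda>r. c + r) ` R)"
  have R0: "0 \<in> R" unfolding R_def by (rule range_eqI[of _ _ 0]) simp
  have Rsub: "a - b \<in> R" if "a \<in> R" "b \<in> R" for a b
    using that unfolding R_def by (auto simp: gdiff[symmetric])
  have Radd: "a + b \<in> R" if "a \<in> R" "b \<in> R" for a b
    using that unfolding R_def by (auto simp: gadd[symmetric])
  have cosets_eq: "(\<lambda>r. c1 + r) ` R = (\<lambda>r. c2 + r) ` R" if "c1 - c2 \<in> R" for c1 c2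
  proof -
    have *: "(\<lambda>r. a + r) ` R \<subseteq> (\<lambda>r. b + r) ` R" if "a - b \<in> R" for a b
    proof
      fix x assume "x \<in> (\<lambda>r. a + r) ` R"
      then obtain r where r: "r \<in> R" "x = a + r" by auto
      have "(a - b) + r \<in> R" using Radd that r by auto
      moreover have "x = b + ((a - b) + r)" using r by (simp add: algebra_simps)
      ultimately show "x \<in> (\<lambda>r. b + r) ` R" by blast
    qed
    have "c2 - c1 \<in> R" using Rsub[OF R0 that] by simp
    with * that show ?thesis by blast
  qed
  have "card R * card F = card (\<Union>F)"
  proof (rule card_partition)
    show "finite F" "finite (\<Union>F)" by auto
    show "card c = card R" if "c \<in> F" for c using that unfolding F_def
      by (auto intro!: card_image simp: inj_on_def)
    show "X \<inter> Y = {}" if XY: "X \<in> F" "Y \<in> F" "X \<noteq> Y" for X Y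
    proof -
      from XY obtain a b where ab: "X = (\<lambda>r. a + r) ` R" "Y = (\<lambda>r. b + r) ` R" unfolding F_def by auto
      show "X \<inter> Y = {}"
      proof (rule ccontr)
        assume "X \<inter> Y \<noteq> {}"
        then obtain r1 r2 where rr: "r1 \<in> R" "r2 \<in> R" and e: "a + r1 = b + r2" using ab by auto
        have "a - b = (a + r1) - (b + r1)" by simp
        also have "\<dots> = (b + r2) - (b + r1)" by (simp only: e)
        also have "\<dots> = r2 - r1" by simp
        finally have "a - b \<in> R" using Rsub[OF rr(2) rr(1)] by simp
        thus False using cosets_eq XY ab by blast
      qed
    qed
  qed
  moreover have "\<Union>F = UNIV"
  proof -
    have "x \<in> (\<lambda>r. x + r) ` R" for x using R0 by (intro image_eqI[of _ _ 0]) simp_all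
    thus ?thesis unfolding F_def by blast
  qed
  ultimately have cardC: "CARD('f ^ 'm) = card R * card F" by simp
  define t where "t = card F"
  have Rpos: "card R > 0" using R0 by (auto simp: card_gt_0_iff)
  have Cpos: "real (CARD('f ^ 'm)) > 0" by simp
  have "real (card S) * real (CARD('f ^ 'm)) = real CARD('f ^ 'n)"
    using S_card Cpos by (simp add: field_simps)
  hence "real (card S * (card R * t)) = real (card R * card K)" using cardU cardC t_def
    by (simp only: of_nat_mult)
  hence "card S * (card R * t) = card R * card K" by (simp only: of_nat_eq_iff)
  hence "card R * (card S * t) = card R * card K" by (simp only: mult.left_commute)
  hence Kc: "card K = card S * t" using Rpos by auto
  have Sfin: "finite S"
  proof (rule ccontr)
    assume "infinite S"
    hence "card S = 0" by simp
    hence "card K = 0" using Kc by simp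
    moreover have "0 \<in> K" using K_def by simp
    ultimately show False by auto
  qed
  obtain \<beta> where \<beta>: "bij_betw \<beta> (UNIV :: ('f^'m) set) (R \<times> {..<t})"
  proof -
    have "card (UNIV :: ('f^'m) set) = card (R \<times> {..<t})" using cardC t_def by (simp add: card_cartesian_product)
    from finite_same_card_bij[OF _ _ this] show ?thesis using that by auto
  qed
  have "\<forall>y\<in>R. \<exists>f. bij_betw f (S \<times> {..<t}) (g -` {y})"
  proof
    fix y assume "y \<in> R"
    hence "card (S \<times> {..<t}) = card (g -` {y})" using fib Kc by (simp add: card_cartesian_product)
    thus "\<exists>f. bij_betw f (S \<times> {..<t}) (g -` {y})" using Sfin by (intro finite_same_card_bij) auto
  qed
  hence "\<exists>f. \<forall>y\<in>R. bij_betw (f y) (S \<times> {..<t}) (g -` {y})" by (rule bchoice)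
  then obtain f where f: "\<And>y. y \<in> R \<Longrightarrow> bij_betw (f y) (S \<times> {..<t}) (g -` {y})" by blast
  define E where "E c s = f (fst (\<beta> c)) (s, snd (\<beta> c))" for c s
  have \<beta>R: "fst (\<beta> c) \<in> R" "snd (\<beta> c) < t" for c
  proof -
    have "\<beta> c \<in> R \<times> {..<t}" using bij_betw_apply[OF \<beta>] by simp
    thus "fst (\<beta> c) \<in> R" "snd (\<beta> c) < t" by auto
  qed
  have gE: "g (E c s) = fst (\<beta> c)" if sS: "s \<in> S" for c s
  proof -
    have "(s, snd (\<beta> c)) \<in> S \<times> {..<t}" using sS \<beta>R(2)[of c] by simp
    from bij_betw_apply[OF f[OF \<beta>R(1)[of c]] this] show ?thesis unfolding E_def by simp
  qed
  have inj: "inj_on (\<lambda>(c,s). E c s) (UNIV \<times> S)"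
  proof (rule inj_onI, clarsimp)
    fix c s c' s' assume S: "s \<in> S" "s' \<in> S" and eq: "E c s = E c' s'"
    have y: "fst (\<beta> c) = fst (\<beta> c')" using gE[OF S(1), of c] gE[OF S(2), of c'] eq by simp
    have "f (fst (\<beta> c)) (s, snd (\<beta> c)) = f (fst (\<beta> c)) (s', snd (\<beta> c'))"
      using eq y unfolding E_def by simp
    moreover have "(s, snd (\<beta> c)) \<in> S \<times> {..<t}" "(s', snd (\<beta> c')) \<in> S \<times> {..<t}"
      using S \<beta>R(2) by auto
    ultimately have "(s, snd (\<beta> c)) = (s', snd (\<beta> c'))"
      using inj_onD[OF bij_betw_imp_inj_on[OF f[OF \<beta>R(1)[of c]]]] by blast
    hence "s = s'" "\<beta> c = \<beta> c'" using y by (auto simp: prod_eq_iff)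
    moreover have "inj \<beta>" using \<beta> by (simp add: bij_betw_def)
    ultimately show "c = c' \<and> s = s'" by (auto dest: injD)
  qed
  have surj: "(\<lambda>(c,s). E c s) ` (UNIV \<times> S) = UNIV"
  proof (auto)
    fix u :: "'f^'n"
    have y: "g u \<in> R" using R_def by simp
    have "u \<in> f (g u) ` (S \<times> {..<t})" using bij_betw_imp_surj_on[OF f[OF y]] by simp
    then obtain p where p: "p \<in> S \<times> {..<t}" and pu: "f (g u) p = u" by (elim imageE) simp
    have "(g u, snd p) \<in> R \<times> {..<t}" using p y by (simp add: mem_Times_iff)
    hence "(g u, snd p) \<in> \<beta> ` UNIV" by (simp only: bij_betw_imp_surj_on[OF \<beta>])
    then obtain c where c0: "(g u, snd p) = \<beta> c" by (rule rangeE)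
    note c = c0[symmetric]
    have "E c (fst p) = u" using pu c unfolding E_def by simp
    moreover have "(c, fst p) \<in> UNIV \<times> S" using p by auto
    ultimately show "u \<in> (\<lambda>(c,s). E c s) ` (UNIV \<times> S)" by (intro image_eqI[of _ _ "(c, fst p)"]) simp_all
  qed
  have "bij_betw (\<lambda>(c,s). E c s) (UNIV \<times> S) UNIV" using inj surj unfolding bij_betw_def by blast
  thus ?thesis using gE by (intro exI[of _ E] exI[of _ "\<lambda>c. fst (\<beta> c)"]) simp
qed



lemma qprob_add: "qprob d A (\<lambda>a b. M a b + N a b) \<rho> = qprob d A M \<rho> + qprob d A N \<rho>"
  unfolding qprob_def by (simp add: distrib_right sum.distrib)

lemma qprob_zero: "qprob d A (\<lambda>a b. 0) \<rho> = 0"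
  unfolding qprob_def by simp

lemma qprob_sum: "qprob d A (\<lambda>a b. \<Sum>u\<in>T. H u a b) \<rho> = (\<Sum>u\<in>T. qprob d A (H u) \<rho>)"
proof -
  have "(\<Sum>a\<in>qbasis d A. \<Sum>b\<in>qbasis d A. (\<Sum>u\<in>T. H u a b) * \<rho> b a)
      = (\<Sum>a\<in>qbasis d A. \<Sum>b\<in>qbasis d A. \<Sum>u\<in>T. H u a b * \<rho> b a)"
    by (simp add: sum_distrib_right)
  also have "\<dots> = (\<Sum>a\<in>qbasis d A. \<Sum>u\<in>T. \<Sum>b\<in>qbasis d A. H u a b * \<rho> b a)"
    by (rule sum.cong[OF refl], rule sum.swap)
  also have "\<dots> = (\<Sum>u\<in>T. \<Sum>a\<in>qbasis d A. \<Sum>b\<in>qbasis d A. H u a b * \<rho> b a)"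
    by (rule sum.swap)
  finally show ?thesis unfolding qprob_def by (simp add: Re_sum)
qed

lemma qprob_total:
  assumes "povm d A U H" "finite A"
  shows "(\<Sum>u\<in>U. qprob d A (H u) \<rho>) = Re (qtrace d A \<rho>)"
proof -
  have fin: "finite (qbasis d A)" using assms(2) by (rule finite_qbasis)
  have "(\<Sum>u\<in>U. qprob d A (H u) \<rho>) = qprob d A (\<lambda>a b. \<Sum>u\<in>U. H u a b) \<rho>" by (rule qprob_sum[symmetric])
  also have "\<dots> = Re (\<Sum>a\<in>qbasis d A. \<Sum>b\<in>qbasis d A. (if a = b then \<rho> b a else 0))"
    unfolding qprob_def using assms(1) unfolding povm_def by (intro arg_cong[where f=Re] sum.cong refl) simp
  also have "\<dots> = Re (qtrace d A \<rho>)" unfolding qtrace_def using fin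
    by (simp add: sum.delta')
  finally show ?thesis .
qed

lemma sform_sum: "sform X (\<lambda>a b. \<Sum>u\<in>T. H u a b) v v = (\<Sum>u\<in>T. sform X (H u) v v)"
proof -
  have "sform X (\<lambda>a b. \<Sum>u\<in>T. H u a b) v v = (\<Sum>x\<in>X. \<Sum>y\<in>X. \<Sum>u\<in>T. cnj (v x) * H u x y * v y)"
    unfolding sform_def by (simp add: sum_distrib_left sum_distrib_right)
  also have "\<dots> = (\<Sum>x\<in>X. \<Sum>u\<in>T. \<Sum>y\<in>X. cnj (v x) * H u x y * v y)"
    by (rule sum.cong[OF refl], rule sum.swap)
  also have "\<dots> = (\<Sum>u\<in>T. sform X (H u) v v)" unfolding sform_def by (rule sum.swap)
  finally show ?thesis .
qed

lemma psd_sum: "(\<And>u. u \<in> T \<Longrightarrow> psdon X (H u)) \<Longrightarrow> psdon X (\<lambda>a b. \<Sum>u\<in>T. H u a b)"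
  unfolding psdon_def sform_sum by (simp add: Im_sum Re_sum sum_nonneg)

lemma psd_add: "psdon X M \<Longrightarrow> psdon X N \<Longrightarrow> psdon X (\<lambda>a b. M a b + N a b)"
proof -
  assume "psdon X M" "psdon X N"
  moreover have "sform X (\<lambda>a b. M a b + N a b) v v = sform X M v v + sform X N v v" for v
    unfolding sform_def by (simp add: algebra_simps sum.distrib)
  ultimately show ?thesis unfolding psdon_def by simp
qed

theorem lemma3:
  fixes L :: nat and d :: "nat \<Rightarrow> nat"
    and \<rho> :: "'f::{finite,field} ^ 'n \<Rightarrow> qop"
    and AA :: "nat set set"
    and P :: "'f ^ 'n \<Rightarrow> real"
    and g :: "'f ^ 'n \<Rightarrow> 'f ^ 'm"
    and h :: "nat set \<Rightarrow> 'f ^ 'm \<Rightarrow> 'f ^ 'n \<Rightarrow> qop"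
    and S :: "'s set"
    and eps1 eps2 :: real
  assumes dims: "\<forall>l\<in>{1..L}. d l \<ge> 1"
    and channel: "\<forall>u. density d {1..L} (\<rho> u)"
    and AA_sub: "\<forall>A\<in>AA. A \<subseteq> {1..L}"
    and P_nonneg: "\<forall>u. P u \<ge> 0"
    and P_sum: "(\<Sum>u\<in>UNIV. P u) = 1"
    and P_close: "vdist P (\<lambda>u. 1 / real CARD('f ^ 'n)) \<le> eps1"
    and g_linear: "Vector_Spaces.linear ((*s) :: 'f \<Rightarrow> 'f ^ 'n \<Rightarrow> 'f ^ 'n) ((*s) :: 'f \<Rightarrow> 'f ^ 'm \<Rightarrow> 'f ^ 'm) g"
    and h_povm: "\<forall>A\<in>AA. \<forall>c. povm d A (UNIV :: ('f ^ 'n) set) (h A c)"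
    and h_err: "\<forall>A\<in>AA. (\<Sum>u\<in>UNIV. P u *
                  (\<Sum>u'\<in>UNIV - {u}. qprob d A (h A (g u) u') (reduced d L A (\<rho> u)))) \<le> eps2"
    and S_card: "real (card S) = real CARD('f ^ 'n) / real CARD('f ^ 'm)"
  shows "\<exists>(Enc :: 'f ^ 'm \<Rightarrow> 's \<Rightarrow> 'f ^ 'n) (Dec :: 'f ^ 'm \<Rightarrow> nat set \<Rightarrow> 's \<Rightarrow> qop).
           (\<forall>c. \<forall>A\<in>AA. povm d A S (Dec c A)) \<and>
           (\<forall>A\<in>AA. (\<Sum>c\<in>UNIV. (1 / real CARD('f ^ 'm)) *
               (\<Sum>s\<in>S. (1 / real (card S)) *
                  (\<Sum>s'\<in>S - {s}. qprob d A (Dec c A s') (reduced d L A (\<rho> (Enc c s))))))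
             \<le> eps1 + eps2)"
proof -
  obtain E :: "'f ^ 'm \<Rightarrow> 's \<Rightarrow> 'f ^ 'n" and \<phi> where
    bijE: "bij_betw (\<lambda>(c,s). E c s) (UNIV \<times> S) UNIV" and gE: "\<And>c s. s \<in> S \<Longrightarrow> g (E c s) = \<phi> c"
    using exists_E[OF g_linear S_card] by blast
  have cardpos: "real (card S) > 0" using S_card by simp
  hence Sfin: "finite S" and Sne: "S \<noteq> {}" by (auto intro: card_ge_0_finite)
  then obtain s0 where s0: "s0 \<in> S" by blast
  have injE: "inj_on (E c) S" for c
  proof (rule inj_onI)
    fix s s' assume "s \<in> S" "s' \<in> S" "E c s = E c s'"
    thus "s = s'" using bij_betw_imp_inj_on[OF bijE] unfolding inj_on_def by auto
  qed
  define T where "T c = UNIV - E c ` S" for c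
  define Dec :: "'f ^ 'm \<Rightarrow> nat set \<Rightarrow> 's \<Rightarrow> qop" where
    "Dec c A s = (\<lambda>a b. h A (\<phi> c) (E c s) a b + (if s = s0 then (\<Sum>u\<in>T c. h A (\<phi> c) u a b) else 0))" for c A s
  have CU: "real CARD('f ^ 'm) * real (card S) = real CARD('f ^ 'n)"
    using S_card by (simp add: field_simps)
  have finA: "finite A" if "A \<in> AA" for A using AA_sub that by (meson finite_atLeastAtMost finite_subset)
  have hpsd: "psdon (qbasis d A) (h A c u)" if "A \<in> AA" for A c u
    using h_povm that unfolding povm_def qpsd_eq by blast
  have redpsd: "psdon (qbasis d A) (reduced d L A (\<rho> u))" if "A \<in> AA" for A u
    using reduced_psd AA_sub channel that by blast
  have redtr: "qtrace d A (reduced d L A (\<rho> u)) = 1" if "A \<in> AA" for A u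
    using reduced_trace AA_sub channel that by blast
  have qnn: "qprob d A (h A c u) (reduced d L A (\<rho> u')) \<ge> 0" if "A \<in> AA" for A c u u'
    unfolding qprob_def using trace_nonneg[OF finite_qbasis[OF finA[OF that]] redpsd[OF that] hpsd[OF that]] .
  have qtot: "(\<Sum>u\<in>UNIV. qprob d A (h A c u) (reduced d L A (\<rho> u'))) = 1" if "A \<in> AA" for A c u'
    using qprob_total[OF h_povm[rule_format, OF that] finA[OF that]] redtr[OF that] by simp
  have povm_ok: "povm d A S (Dec c A)" if AA: "A \<in> AA" for c A
    unfolding povm_def
  proof (intro conjI ballI)
    show "finite S" by (rule Sfin)
  next
    fix s assume "s \<in> S"
    show "qpsd d A (Dec c A s)" unfolding qpsd_eq Dec_def
      by (cases "s = s0") (simp_all add: psd_add psd_sum hpsd[OF AA])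
  next
    fix a b assume ab: "a \<in> qbasis d A" "b \<in> qbasis d A"
    have "(\<Sum>s\<in>S. Dec c A s a b) = (\<Sum>s\<in>S. h A (\<phi> c) (E c s) a b + (if s = s0 then (\<Sum>u\<in>T c. h A (\<phi> c) u a b) else 0))"
      unfolding Dec_def by (rule refl)
    also have "\<dots> = (\<Sum>s\<in>S. h A (\<phi> c) (E c s) a b) + (\<Sum>s\<in>S. (if s = s0 then (\<Sum>u\<in>T c. h A (\<phi> c) u a b) else 0))"
      by (rule sum.distrib)
    also have "(\<Sum>s\<in>S. (if s = s0 then (\<Sum>u\<in>T c. h A (\<phi> c) u a b) else 0)) = (\<Sum>u\<in>T c. h A (\<phi> c) u a b)"
      by (simp only: sum.delta[OF Sfin] if_P[OF s0])
    also have "(\<Sum>s\<in>S. h A (\<phi> c) (E c s) a b) = (\<Sum>u\<in>E c ` S. h A (\<phi> c) u a b)"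
      using sum.reindex[OF injE[of c], of "\<lambda>u. h A (\<phi> c) u a b"] by simp
    also have "(\<Sum>u\<in>E c ` S. h A (\<phi> c) u a b) + (\<Sum>u\<in>T c. h A (\<phi> c) u a b) = (\<Sum>u\<in>UNIV. h A (\<phi> c) u a b)"
      unfolding T_def by (rule sum.subset_diff[symmetric, where B = "E c ` S" and A = UNIV, simplified add.commute]) auto
    also have "\<dots> = (if a = b then 1 else 0)" using h_povm AA ab unfolding povm_def by blast
    finally show "(\<Sum>s\<in>S. Dec c A s a b) = (if a = b then 1 else 0)" .
  qed
  have bound: "(\<Sum>c\<in>UNIV. (1 / real CARD('f ^ 'm)) *
               (\<Sum>s\<in>S. (1 / real (card S)) *
                  (\<Sum>s'\<in>S - {s}. qprob d A (Dec c A s') (reduced d L A (\<rho> (E c s))))))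
             \<le> eps1 + eps2" if AA: "A \<in> AA" for A
  proof -
    define red where "red u = reduced d L A (\<rho> u)" for u
    define a where "a u = (\<Sum>u'\<in>UNIV - {u}. qprob d A (h A (g u) u') (red u))" for u
    have a_nn: "a u \<ge> 0" for u unfolding a_def red_def using qnn[OF AA] by (simp add: sum_nonneg)
    have a_le: "a u \<le> 1" for u
    proof -
      have "a u = (\<Sum>u'\<in>UNIV. qprob d A (h A (g u) u') (red u)) - qprob d A (h A (g u) u) (red u)"
        unfolding a_def by (simp add: sum_diff1)
      thus ?thesis using qtot[OF AA] qnn[OF AA] unfolding red_def by simp
    qed
    have err: "(\<Sum>s'\<in>S - {s}. qprob d A (Dec c A s') (red (E c s))) \<le> a (E c s)" if sS: "s \<in> S" for c s
    proof -
      let ?q = "\<lambda>u. qprob d A (h A (\<phi> c) u) (red (E c s))"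
      have X0: "(\<Sum>u\<in>T c. ?q u) \<ge> 0" using qnn[OF AA] unfolding red_def by (simp add: sum_nonneg)
      have "(\<Sum>s'\<in>S - {s}. qprob d A (Dec c A s') (red (E c s))) =
          (\<Sum>s'\<in>S - {s}. ?q (E c s') + (if s' = s0 then (\<Sum>u\<in>T c. ?q u) else 0))"
        unfolding Dec_def qprob_add by (intro sum.cong refl) (simp add: qprob_sum qprob_zero)
      also have "\<dots> = (\<Sum>s'\<in>S - {s}. ?q (E c s')) + (if s0 \<in> S - {s} then (\<Sum>u\<in>T c. ?q u) else 0)"
        using Sfin by (simp add: sum.distrib sum.delta cong: if_cong)
      also have "\<dots> \<le> (\<Sum>s'\<in>S - {s}. ?q (E c s')) + (\<Sum>u\<in>T c. ?q u)" using X0 by simp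
      also have "(\<Sum>s'\<in>S - {s}. ?q (E c s')) = (\<Sum>u\<in>E c ` (S - {s}). ?q u)"
        using sum.reindex[OF inj_on_subset[OF injE[of c]], of "S - {s}" ?q] by auto
      also have "(\<Sum>u\<in>E c ` (S - {s}). ?q u) + (\<Sum>u\<in>T c. ?q u) = (\<Sum>u\<in>E c ` (S - {s}) \<union> T c. ?q u)"
        by (rule sum.union_disjoint[symmetric]) (auto simp: T_def)
      also have "E c ` (S - {s}) \<union> T c = UNIV - {E c s}"
        unfolding T_def using sS injE[of c] by (auto simp: inj_on_def)
      also have "(\<Sum>u\<in>UNIV - {E c s}. ?q u) = a (E c s)" unfolding a_def gE[OF sS] ..
      finally show ?thesis .
    qed
    have "(\<Sum>c\<in>UNIV. (1 / real CARD('f ^ 'm)) *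
               (\<Sum>s\<in>S. (1 / real (card S)) *
                  (\<Sum>s'\<in>S - {s}. qprob d A (Dec c A s') (reduced d L A (\<rho> (E c s))))))
          \<le> (\<Sum>c\<in>UNIV. (1 / real CARD('f ^ 'm)) * (\<Sum>s\<in>S. (1 / real (card S)) * a (E c s)))"
      using err unfolding red_def
      by (intro sum_mono mult_left_mono) auto
    also have "\<dots> = (1 / (real CARD('f ^ 'm) * real (card S))) * (\<Sum>c\<in>UNIV. \<Sum>s\<in>S. a (E c s))"
      by (simp add: sum_distrib_left)
    also have "(\<Sum>c\<in>UNIV. \<Sum>s\<in>S. a (E c s)) = (\<Sum>u\<in>UNIV. a u)"
    proof -
      have "(\<Sum>c\<in>UNIV. \<Sum>s\<in>S. a (E c s)) = (\<Sum>p\<in>UNIV \<times> S. a ((\<lambda>(c,s). E c s) p))"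
        by (simp add: sum.cartesian_product prod.case_distrib)
      also have "\<dots> = (\<Sum>u\<in>UNIV. a u)" by (rule sum.reindex_bij_betw[OF bijE])
      finally show ?thesis .
    qed
    also have "(1 / (real CARD('f ^ 'm) * real (card S))) * (\<Sum>u\<in>UNIV. a u) = (\<Sum>u\<in>UNIV. (1 / real CARD('f ^ 'n)) * a u)"
      unfolding CU by (simp add: sum_distrib_left)
    also have "\<dots> = (\<Sum>u\<in>UNIV. P u * a u) + (\<Sum>u\<in>UNIV. (1 / real CARD('f ^ 'n) - P u) * a u)"
      by (simp add: sum.distrib[symmetric] algebra_simps)
    also have "(\<Sum>u\<in>UNIV. P u * a u) \<le> eps2"
      using h_err AA unfolding a_def red_def by blast
    also have "(\<Sum>u\<in>UNIV. (1 / real CARD('f ^ 'n) - P u) * a u) \<le> (\<Sum>u\<in>UNIV. \<bar>P u - 1 / real CARD('f ^ 'n)\<bar>)"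
    proof (rule sum_mono)
      fix u
      have "(1 / real CARD('f ^ 'n) - P u) * a u \<le> \<bar>P u - 1 / real CARD('f ^ 'n)\<bar> * a u"
        using a_nn[of u] by (intro mult_right_mono) auto
      also have "\<dots> \<le> \<bar>P u - 1 / real CARD('f ^ 'n)\<bar>" using a_le[of u] by (simp add: mult_left_le)
      finally show "(1 / real CARD('f ^ 'n) - P u) * a u \<le> \<bar>P u - 1 / real CARD('f ^ 'n)\<bar>" .
    qed
    also have "\<dots> \<le> eps1" using P_close unfolding vdist_def .
    finally show ?thesis by simp
  qed
  show ?thesis
    by (rule exI[of _ E], rule exI[of _ Dec]) (use povm_ok bound in blast)
qed


end
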